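(* In the subgroup setting described in the context: (1) for all integers $k,l\geq 0$, $R(k,l)\subseteq B_G(1_G,k+l)$; (2) for every integer $k\geq 0$, $B_G(1_G,k)\subseteq R(k,\Lambda(k))$, where $\Lambda(k)=\max_{g\in B_G(1_G,k)}\|g\|_H$.
   Context: $G$ is a finitely generated group and $H$ a finitely generated subgroup. $E_H$ is a finite generating set of $H$ closed under inverses and $D\supseteq E_H$ a finite generating set of $G$ closed under inverses; $d_H$, $d_G$ are the corresponding word metrics, $B_G(1_G,k)$ the closed ball of radius $k$ in $d_G$, $\|g\|_G=d_G(1_G,g)$. $F\subseteq G$ contains exactly one element of each left coset $gH$, chosen as an element of minimal $\|\cdot\|_G$ in that coset (with $1_G$ chosen for $H$); so every $g$ is uniquely $g=fh$, $f\in F$, $h\in H$, and $\|g\|_G\geq\|f\|_G$ for all $g\in fH$. Define $\pi(g)=f^{-1}g\in H$ for $g\in fH$, $\|g\|_H=d_H(1_G,\pi(g))$, and $\omega(g)=d_G(1_G,gH)=\|f\|_G$ for $g\in fH$. The rectangle of height $k$ and length $l$ is $R(k,l)=\{g\in G:\omega(g)\leq k,\ \|g\|_H\leq l\}$. *)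

theory Defs
  imports "HOL-Algebra.Algebra"
begin

definition word_length :: "('a, 'b) monoid_scheme \<Rightarrow> 'a set \<Rightarrow> 'a \<Rightarrow> nat" where
  "word_length G S g = (LEAST n. \<exists>ws. length ws = n \<and> set ws \<subseteq> S \<and> foldr (\<otimes>\<^bsub>G\<^esub>) ws \<one>\<^bsub>G\<^esub> = g)"

definition word_dist :: "('a, 'b) monoid_scheme \<Rightarrow> 'a set \<Rightarrow> 'a \<Rightarrow> 'a \<Rightarrow> nat" where
  "word_dist G S x y = word_length G S (inv\<^bsub>G\<^esub> x \<otimes>\<^bsub>G\<^esub> y)"

definition word_ball :: "('a, 'b) monoid_scheme \<Rightarrow> 'a set \<Rightarrow> nat \<Rightarrow> 'a set" where
  "word_ball G S k = {g \<in> carrier G. word_dist G S \<one>\<^bsub>G\<^esub> g \<le> k}"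

definition coset_rep :: "('a, 'b) monoid_scheme \<Rightarrow> 'a set \<Rightarrow> 'a set \<Rightarrow> 'a \<Rightarrow> 'a" where
  "coset_rep G H F g = (THE f. f \<in> F \<and> g \<in> f <#\<^bsub>G\<^esub> H)"

definition coset_proj :: "('a, 'b) monoid_scheme \<Rightarrow> 'a set \<Rightarrow> 'a set \<Rightarrow> 'a \<Rightarrow> 'a" where
  "coset_proj G H F g = inv\<^bsub>G\<^esub> (coset_rep G H F g) \<otimes>\<^bsub>G\<^esub> g"

definition normH :: "('a, 'b) monoid_scheme \<Rightarrow> 'a set \<Rightarrow> 'a set \<Rightarrow> 'a set \<Rightarrow> 'a \<Rightarrow> nat" where
  "normH G H F E g = word_dist G E \<one>\<^bsub>G\<^esub> (coset_proj G H F g)"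

definition height :: "('a, 'b) monoid_scheme \<Rightarrow> 'a set \<Rightarrow> 'a set \<Rightarrow> 'a \<Rightarrow> nat" where
  "height G H D g = (LEAST n. \<exists>x \<in> g <#\<^bsub>G\<^esub> H. word_dist G D \<one>\<^bsub>G\<^esub> x = n)"

definition rectangle :: "('a, 'b) monoid_scheme \<Rightarrow> 'a set \<Rightarrow> 'a set \<Rightarrow> 'a set \<Rightarrow> 'a set \<Rightarrow> nat \<Rightarrow> nat \<Rightarrow> 'a set" where
  "rectangle G H F D E k l =
     {g \<in> carrier G. height G H D g \<le> k \<and> normH G H F E g \<le> l}"

definition Lambda :: "('a, 'b) monoid_scheme \<Rightarrow> 'a set \<Rightarrow> 'a set \<Rightarrow> 'a set \<Rightarrow> 'a set \<Rightarrow> nat \<Rightarrow> nat" where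
  "Lambda G H F D E k = Max (normH G H F E ` word_ball G D k)"

end

theory Submission
  imports Defs
begin

lemma (in group) foldr_carrier: "set ws \<subseteq> carrier G \<Longrightarrow> foldr (\<otimes>) ws \<one> \<in> carrier G"
  by (induction ws) auto

lemma (in group) foldr_shift:
  "set ws \<subseteq> carrier G \<Longrightarrow> b \<in> carrier G \<Longrightarrow> foldr (\<otimes>) ws b = foldr (\<otimes>) ws \<one> \<otimes> b"
proof (induction ws)
  case Nil
  then show ?case by simp
next
  case (Cons a ws)
  then have a: "a \<in> carrier G" and ws: "set ws \<subseteq> carrier G" by auto
  have "foldr (\<otimes>) (a # ws) b = a \<otimes> foldr (\<otimes>) ws b" by simp
  also have "\<dots> = a \<otimes> (foldr (\<otimes>) ws \<one> \<otimes> b)" using Cons ws by simp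
  also have "\<dots> = (a \<otimes> foldr (\<otimes>) ws \<one>) \<otimes> b"
    using a ws Cons.prems(2) foldr_carrier[OF ws] by (simp add: m_assoc)
  finally show ?case by simp
qed

lemma (in group) foldr_append:
  "set ws \<subseteq> carrier G \<Longrightarrow> set vs \<subseteq> carrier G \<Longrightarrow>
   foldr (\<otimes>) (ws @ vs) \<one> = foldr (\<otimes>) ws \<one> \<otimes> foldr (\<otimes>) vs \<one>"
  using foldr_shift[of ws "foldr (\<otimes>) vs \<one>", OF _ foldr_carrier[of vs]] by simp

lemma (in group) word_exists:
  assumes "S \<subseteq> carrier G" "\<forall>x \<in> S. inv x \<in> S" "x \<in> generate G S"
  shows "\<exists>ws. set ws \<subseteq> S \<and> foldr (\<otimes>) ws \<one> = x"
  using assms(3)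
proof (induction rule: generate.induct)
  case one
  then show ?case by (intro exI[of _ "[]"]) auto
next
  case (incl h)
  then show ?case using assms(1) by (intro exI[of _ "[h]"]) auto
next
  case (inv h)
  then show ?case using assms by (intro exI[of _ "[inv h]"]) auto
next
  case (eng h1 h2)
  then obtain ws vs where "set ws \<subseteq> S" "foldr (\<otimes>) ws \<one> = h1" "set vs \<subseteq> S" "foldr (\<otimes>) vs \<one> = h2"
    by blast
  then show ?case using assms(1) foldr_append[of ws vs]
    by (intro exI[of _ "ws @ vs"]) auto
qed

lemma wl_attained:
  assumes "\<exists>ws. set ws \<subseteq> S \<and> foldr (\<otimes>\<^bsub>G\<^esub>) ws \<one>\<^bsub>G\<^esub> = x"
  shows "\<exists>ws. length ws = word_length G S x \<and> set ws \<subseteq> S \<and> foldr (\<otimes>\<^bsub>G\<^esub>) ws \<one>\<^bsub>G\<^esub> = x"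
  unfolding word_length_def
  by (rule LeastI_ex) (use assms in blast)

lemma wl_le:
  assumes "set ws \<subseteq> S" "foldr (\<otimes>\<^bsub>G\<^esub>) ws \<one>\<^bsub>G\<^esub> = x"
  shows "word_length G S x \<le> length ws"
  unfolding word_length_def
  by (rule Least_le) (use assms in blast)

lemma (in group) wl_subadd:
  assumes "S \<subseteq> carrier G"
    and "\<exists>ws. set ws \<subseteq> S \<and> foldr (\<otimes>) ws \<one> = x"
    and "\<exists>ws. set ws \<subseteq> S \<and> foldr (\<otimes>) ws \<one> = y"
  shows "word_length G S (x \<otimes> y) \<le> word_length G S x + word_length G S y"
proof -
  obtain ws where ws: "length ws = word_length G S x" "set ws \<subseteq> S" "foldr (\<otimes>) ws \<one> = x"
    using wl_attained[OF assms(2)] by blast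
  obtain vs where vs: "length vs = word_length G S y" "set vs \<subseteq> S" "foldr (\<otimes>) vs \<one> = y"
    using wl_attained[OF assms(3)] by blast
  have "foldr (\<otimes>) (ws @ vs) \<one> = x \<otimes> y"
    using foldr_append[of ws vs] ws vs assms(1) by auto
  then have "word_length G S (x \<otimes> y) \<le> length (ws @ vs)"
    using ws vs by (intro wl_le) auto
  then show ?thesis using ws vs by simp
qed

lemma (in group) wl_mono:
  assumes "S \<subseteq> T" "\<exists>ws. set ws \<subseteq> S \<and> foldr (\<otimes>) ws \<one> = x"
  shows "word_length G T x \<le> word_length G S x"
proof -
  obtain ws where ws: "length ws = word_length G S x" "set ws \<subseteq> S" "foldr (\<otimes>) ws \<one> = x"
    using wl_attained[OF assms(2)] by blast
  then have "word_length G T x \<le> length ws" using assms(1) by (intro wl_le) auto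
  then show ?thesis using ws by simp
qed

lemma (in group) ball_finite:
  assumes "finite S" "S \<subseteq> carrier G" "\<forall>x \<in> S. inv x \<in> S" "generate G S = carrier G"
  shows "finite (word_ball G S k)"
proof -
  have "word_ball G S k \<subseteq> (\<lambda>ws. foldr (\<otimes>) ws \<one>) ` {ws. set ws \<subseteq> S \<and> length ws \<le> k}"
  proof
    fix g assume g: "g \<in> word_ball G S k"
    then have gc: "g \<in> carrier G" and le: "word_length G S g \<le> k"
      by (auto simp: word_ball_def word_dist_def)
    obtain ws where "length ws = word_length G S g" "set ws \<subseteq> S" "foldr (\<otimes>) ws \<one> = g"
      using wl_attained[OF word_exists[OF assms(2,3)]] gc assms(4) by blast
    then show "g \<in> (\<lambda>ws. foldr (\<otimes>) ws \<one>) ` {ws. set ws \<subseteq> S \<and> length ws \<le> k}"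
      using le by auto
  qed
  moreover have "finite {ws. set ws \<subseteq> S \<and> length ws \<le> k}"
    using finite_lists_length_le[OF assms(1)] by simp
  ultimately show ?thesis by (meson finite_imageI finite_subset)
qed

theorem proposition4:
  fixes G (structure) and H D E F :: "'a set"
  assumes grp: "group G"
    and sub: "subgroup H G"
    and D_fin: "finite D" and D_sub: "D \<subseteq> carrier G"
    and D_inv: "\<forall>x \<in> D. inv x \<in> D" and D_gen: "generate G D = carrier G"
    and E_fin: "finite E" and E_sub: "E \<subseteq> H"
    and E_inv: "\<forall>x \<in> E. inv x \<in> E" and E_gen: "generate G E = H"
    and E_D: "E \<subseteq> D"
    and F_sub: "F \<subseteq> carrier G"
    and F_rep: "\<forall>g \<in> carrier G. \<exists>!f. f \<in> F \<and> g \<in> f <# H"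
    and F_one: "\<one> \<in> F"
    and F_min: "\<forall>f \<in> F. \<forall>g \<in> f <# H. word_dist G D \<one> f \<le> word_dist G D \<one> g"
  shows "(\<forall>k l. rectangle G H F D E k l \<subseteq> word_ball G D (k + l))
       \<and> (\<forall>k. word_ball G D k \<subseteq> rectangle G H F D E k (Lambda G H F D E k))"
proof -
  interpret group G by (rule grp)
  have Hc: "H \<subseteq> carrier G" using sub subgroup.subset by blast
  have Ec: "E \<subseteq> carrier G" using E_sub Hc by blast
  have wd: "word_dist G S \<one> x = word_length G S x" if "x \<in> carrier G" for S x
    using that by (simp add: word_dist_def)
  have wD: "\<exists>ws. set ws \<subseteq> D \<and> foldr (\<otimes>) ws \<one> = x" if "x \<in> carrier G" for x
    using word_exists[OF D_sub D_inv] that D_gen by blast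
  have wE: "\<exists>ws. set ws \<subseteq> E \<and> foldr (\<otimes>) ws \<one> = x" if "x \<in> H" for x
    using word_exists[OF Ec E_inv] that E_gen by blast
  have height_le: "height G H D g \<le> word_length G D g" if "g \<in> carrier G" for g
  proof -
    have "g \<in> g <# H" using that sub by (auto simp: l_coset_def intro!: bexI[of _ \<one>] subgroup.one_closed)
    then show ?thesis unfolding height_def using wd[OF that]
      by (intro Least_le) blast
  qed
  have rep: "coset_rep G H F g \<in> F \<and> g \<in> coset_rep G H F g <# H" if "g \<in> carrier G" for g
  proof -
    have "\<exists>!f. f \<in> F \<and> g \<in> f <# H" using F_rep that by blast
    then show ?thesis unfolding coset_rep_def by (rule theI')
  qed
  have part1: "rectangle G H F D E k l \<subseteq> word_ball G D (k + l)" for k l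
  proof
    fix g assume "g \<in> rectangle G H F D E k l"
    then have gc: "g \<in> carrier G" and hk: "height G H D g \<le> k" and nl: "normH G H F E g \<le> l"
      by (auto simp: rectangle_def)
    define f where "f = coset_rep G H F g"
    have fF: "f \<in> F" and gf: "g \<in> f <# H" using rep[OF gc] f_def by auto
    have fc: "f \<in> carrier G" using fF F_sub by blast
    obtain h where hH: "h \<in> H" and gfh: "g = f \<otimes> h" using gf by (auto simp: l_coset_def)
    have hc: "h \<in> carrier G" using hH Hc by blast
    have pi: "coset_proj G H F g = h"
    proof -
      have "coset_proj G H F g = inv f \<otimes> g" unfolding coset_proj_def f_def by simp
      also have "\<dots> = h" using gfh fc hc by (simp add: m_assoc[symmetric])
      finally show ?thesis .
    qed
    have nH: "normH G H F E g = word_length G E h"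
      using pi hc by (simp add: normH_def wd)
    have "gH": "g <# H = f <# H"
      using l_repr_independence[OF gf fc sub] by simp
    obtain x where xg: "x \<in> g <# H" and hx: "word_dist G D \<one> x = height G H D g"
    proof -
      have "\<exists>x \<in> g <# H. word_dist G D \<one> x = word_dist G D \<one> g"
        using gf gH by blast
      then have "\<exists>x \<in> g <# H. word_dist G D \<one> x = height G H D g"
        unfolding height_def by (rule LeastI)
      then show ?thesis using that by blast
    qed
    have "word_length G D f \<le> height G H D g"
      proof -
      have "word_dist G D \<one> f \<le> word_dist G D \<one> x" using F_min fF xg gH by blast
      then show ?thesis using hx wd[OF fc] by simp
    qed
    moreover have "word_length G D h \<le> word_length G E h"
      using wl_mono[OF E_D wE[OF hH]] .
    moreover have "word_length G D g \<le> word_length G D f + word_length G D h"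
      using wl_subadd[OF D_sub wD[OF fc] wD[OF hc]] gfh by simp
    ultimately have "word_length G D g \<le> k + l" using hk nl nH by linarith
    then show "g \<in> word_ball G D (k + l)" using gc wd[OF gc] by (simp add: word_ball_def)
  qed
  have part2: "word_ball G D k \<subseteq> rectangle G H F D E k (Lambda G H F D E k)" for k
  proof
    fix g assume g: "g \<in> word_ball G D k"
    then have gc: "g \<in> carrier G" and le: "word_length G D g \<le> k"
      using wd by (auto simp: word_ball_def)
    have "height G H D g \<le> k" using height_le[OF gc] le by linarith
    moreover have "normH G H F E g \<le> Lambda G H F D E k"
      unfolding Lambda_def using g ball_finite[OF D_fin D_sub D_inv D_gen]
      by (intro Max_ge) auto
    ultimately show "g \<in> rectangle G H F D E k (Lambda G H F D E k)"
      using gc by (simp add: rectangle_def)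
  qed
  show ?thesis using part1 part2 by (intro conjI allI)
qed

end
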